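(* Let $w=0$ in the dynamical system described in the context. Let $(\Sigma_+,\Sigma_A,\Sigma_B,\Sigma_C,v_{(1)},v_{(2)},\Omega_{(1)},\Omega_{(2)})(\tau)$ be a solution defined for all $\tau\ge\tau_0$ which at $\tau_0$ lies in the interior state space, i.e. $\Omega_{(1)}\Omega_{(2)}>0$ and $0<v_{(i)}^2<1$ for $i=1,2$, and satisfies the constraints. Then as $\tau\to+\infty$: $q\to \tfrac12$, $\Omega_{(1)}+\Omega_{(2)}\to 1$, $\Sigma_+,\Sigma_A,\Sigma_B,\Sigma_C\to 0$ and $v_{(1)},v_{(2)}\to 0$; i.e. the solution approaches the line of flat Friedmann–Lemaître fixed points $\Sigma_\pm=\Sigma_A=\Sigma_B=\Sigma_C=0$, $v_{(1)}=v_{(2)}=0$, $\Omega_{(1)}+\Omega_{(2)}=1$.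
   Context: Fix a constant $w\in[0,1)$ (the common equation of state parameter of two perfect fluids, $p_{(i)}=w\rho_{(i)}$). The state variables are real functions of a time $\tau$: $\Sigma_+,\Sigma_A,\Sigma_B,\Sigma_C,v_{(1)},v_{(2)},\Omega_{(1)},\Omega_{(2)}$, with $'$ denoting $d/d\tau$. Define $\Sigma^2=\Sigma_+^2+\Sigma_A^2+\Sigma_B^2+\Sigma_C^2$, $G^{(i)}_\pm=1\pm w v_{(i)}^2$, $Q_{(i)}=(1+w)(G^{(i)}_+)^{-1}v_{(i)}\Omega_{(i)}$, $P_{(i)}=w\Omega_{(i)}+\tfrac13(1-3w)Q_{(i)}v_{(i)}$, $\Omega_m=\Omega_{(1)}+\Omega_{(2)}$, $P_m=P_{(1)}+P_{(2)}$, and $q=2\Sigma^2+\tfrac12(\Omega_m+3P_m)$. The evolution equations are $\Sigma_+'=-(2-q)\Sigma_++3\Sigma_A^2-Q_{(1)}v_{(1)}-Q_{(2)}v_{(2)}$, $\Sigma_A'=-(2-q+3\Sigma_++\sqrt3\Sigma_B)\Sigma_A$, $\Sigma_B'=-(2-q)\Sigma_B+\sqrt3\Sigma_A^2-2\sqrt3\Sigma_C^2$, $\Sigma_C'=-(2-q-2\sqrt3\Sigma_B)\Sigma_C$, $v_{(i)}'=(G^{(i)}_-)^{-1}(1-v_{(i)}^2)(3w-1+2\Sigma_+)v_{(i)}$, $\Omega_{(i)}'=(2q-1-3w)\Omega_{(i)}+(3w-1+2\Sigma_+)Q_{(i)}v_{(i)}$, for $i=1,2$, subject to the constraints $1-\Sigma^2-\Omega_{(1)}-\Omega_{(2)}=0$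 and $Q_{(1)}+Q_{(2)}=0$, with $\Omega_{(i)}\ge0$, $v_{(i)}^2\le 1$. (This describes Bianchi type I cosmologies with two tilted perfect fluids, in expansion-normalized variables.) *)

theory Defs
  imports "HOL-Analysis.Analysis"
begin

text \<open>Bianchi I cosmologies with two tilted perfect fluids, expansion-normalized
variables; w is the common equation of state parameter.\<close>

definition Gp :: "real \<Rightarrow> real \<Rightarrow> real" where
  "Gp w v = 1 + w * v\<^sup>2"

definition Gm :: "real \<Rightarrow> real \<Rightarrow> real" where
  "Gm w v = 1 - w * v\<^sup>2"

definition Qf :: "real \<Rightarrow> real \<Rightarrow> real \<Rightarrow> real" where
  "Qf w v Om = (1 + w) * v * Om / Gp w v"

definition Pf :: "real \<Rightarrow> real \<Rightarrow> real \<Rightarrow> real" where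
  "Pf w v Om = w * Om + (1 - 3 * w) / 3 * Qf w v Om * v"

definition Sig2 :: "real \<Rightarrow> real \<Rightarrow> real \<Rightarrow> real \<Rightarrow> real" where
  "Sig2 Sp SA SB SC = Sp\<^sup>2 + SA\<^sup>2 + SB\<^sup>2 + SC\<^sup>2"

definition qf :: "real \<Rightarrow> real \<Rightarrow> real \<Rightarrow> real \<Rightarrow> real \<Rightarrow> real \<Rightarrow> real \<Rightarrow> real \<Rightarrow> real \<Rightarrow> real" where
  "qf w Sp SA SB SC v1 v2 O1 O2 =
     2 * Sig2 Sp SA SB SC + (1/2) * ((O1 + O2) + 3 * (Pf w v1 O1 + Pf w v2 O2))"

definition is_solution ::
  "real \<Rightarrow> real \<Rightarrow> (real \<Rightarrow> real) \<Rightarrow> (real \<Rightarrow> real) \<Rightarrow> (real \<Rightarrow> real) \<Rightarrow> (real \<Rightarrow> real)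
   \<Rightarrow> (real \<Rightarrow> real) \<Rightarrow> (real \<Rightarrow> real) \<Rightarrow> (real \<Rightarrow> real) \<Rightarrow> (real \<Rightarrow> real) \<Rightarrow> bool" where
  "is_solution w t0 Sp SA SB SC v1 v2 O1 O2 \<longleftrightarrow>
    (\<forall>t\<ge>t0.
      (let q = qf w (Sp t) (SA t) (SB t) (SC t) (v1 t) (v2 t) (O1 t) (O2 t);
           Q1 = Qf w (v1 t) (O1 t); Q2 = Qf w (v2 t) (O2 t) in
       (Sp has_real_derivative
          (-(2 - q) * Sp t + 3 * (SA t)\<^sup>2 - Q1 * v1 t - Q2 * v2 t)) (at t within {t0..}) \<and>
       (SA has_real_derivative
          (-(2 - q + 3 * Sp t + sqrt 3 * SB t) * SA t)) (at t within {t0..}) \<and>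
       (SB has_real_derivative
          (-(2 - q) * SB t + sqrt 3 * (SA t)\<^sup>2 - 2 * sqrt 3 * (SC t)\<^sup>2)) (at t within {t0..}) \<and>
       (SC has_real_derivative
          (-(2 - q - 2 * sqrt 3 * SB t) * SC t)) (at t within {t0..}) \<and>
       (v1 has_real_derivative
          ((1 - (v1 t)\<^sup>2) * (3 * w - 1 + 2 * Sp t) * v1 t / Gm w (v1 t))) (at t within {t0..}) \<and>
       (v2 has_real_derivative
          ((1 - (v2 t)\<^sup>2) * (3 * w - 1 + 2 * Sp t) * v2 t / Gm w (v2 t))) (at t within {t0..}) \<and>
       (O1 has_real_derivative
          ((2 * q - 1 - 3 * w) * O1 t + (3 * w - 1 + 2 * Sp t) * Q1 * v1 t)) (at t within {t0..}) \<and>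
       (O2 has_real_derivative
          ((2 * q - 1 - 3 * w) * O2 t + (3 * w - 1 + 2 * Sp t) * Q2 * v2 t)) (at t within {t0..})))"

definition admissible :: "real \<Rightarrow> real \<Rightarrow> real \<Rightarrow> real \<Rightarrow> real \<Rightarrow> real \<Rightarrow> real \<Rightarrow> real \<Rightarrow> real \<Rightarrow> bool" where
  "admissible w Sp SA SB SC v1 v2 O1 O2 \<longleftrightarrow>
     1 - Sig2 Sp SA SB SC - O1 - O2 = 0 \<and> Qf w v1 O1 + Qf w v2 O2 = 0 \<and>
     O1 \<ge> 0 \<and> O2 \<ge> 0 \<and> v1\<^sup>2 \<le> 1 \<and> v2\<^sup>2 \<le> 1"

end

theory Submission
  imports Defs
begin

lemma mono_deriv:
  fixes g g' :: "real \<Rightarrow> real"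
  assumes ab: "a \<le> b"
    and d: "\<And>t. a \<le> t \<Longrightarrow> t \<le> b \<Longrightarrow> (g has_real_derivative g' t) (at t within {a..b})"
    and nn: "\<And>t. a \<le> t \<Longrightarrow> t \<le> b \<Longrightarrow> 0 \<le> g' t"
  shows "g a \<le> g b"
proof (rule DERIV_nonneg_imp_increasing_open[OF ab])
  fix x assume x: "a < x" "x < b"
  have "(g has_real_derivative g' x) (at x)"
    using d[of x] x at_within_Icc_at[OF x] by simp
  then show "\<exists>y. DERIV g x :> y \<and> y \<ge> 0" using nn[of x] x by auto
next
  show "continuous_on {a..b} g"
    unfolding continuous_on_eq_continuous_within by (meson DERIV_continuous d atLeastAtMost_iff)
qed

lemma fluid_E:
  assumes "(v has_real_derivative ((1 - (v t)^2)*A* v t)) (at t within S)"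
    "(Om has_real_derivative (F*Om t + A*(v t)^2*Om t)) (at t within S)"
  shows "((\<lambda>s. (Om s)^2*(1 - (v s)^2)) has_real_derivative (2*F*((Om t)^2*(1-(v t)^2)))) (at t within S)"
proof -
  have "((\<lambda>s. (Om s)^2*(1 - (v s)^2)) has_real_derivative
     (2*Om t*(F*Om t + A*(v t)^2*Om t))*(1 - (v t)^2) + (Om t)^2*(-(2* v t*((1 - (v t)^2)*A* v t)))) (at t within S)"
    by (rule derivative_eq_intros assms refl | simp)+
  moreover have "(2*Om t*(F*Om t + A*(v t)^2*Om t))*(1 - (v t)^2) + (Om t)^2*(-(2* v t*((1 - (v t)^2)*A* v t)))
     = 2*F*((Om t)^2*(1-(v t)^2))" by (simp add: algebra_simps power2_eq_square)
  ultimately show ?thesis by simp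
qed

lemma fluid_bound:
  fixes v Om F A :: real
  assumes v: "v^2 \<le> 1" and Om: "0 \<le> Om" "Om \<le> 1" and F: "0 \<le> F" "F \<le> 3" and A: "\<bar>A\<bar> \<le> 3"
  shows "\<bar>(-(2* v *((1 - v^2)*A* v)))*Om + (3 - v^2)*(F*Om + A* v^2*Om)\<bar> \<le> 24"
proof -
  have av: "\<bar>v\<bar> \<le> 1" using v by (simp add: abs_square_le_1)
  have v0: "0 \<le> v^2" by simp
  have w1: "\<bar>1 - v^2\<bar> \<le> 1" using v v0 by linarith
  have dv: "\<bar>(1 - v^2)*A* v\<bar> \<le> 3"
  proof -
    have "\<bar>(1 - v^2)*A* v\<bar> = \<bar>1 - v^2\<bar>*\<bar>A\<bar>*\<bar>v\<bar>" by (simp add: abs_mult)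
    also have "\<dots> \<le> 1*3*1" by (intro mult_mono w1 A av) auto
    finally show ?thesis by simp
  qed
  have t1: "\<bar>F*Om\<bar> \<le> 3" using F Om mult_mono[of F 3 Om 1] by simp
  have t2: "\<bar>A* v^2*Om\<bar> \<le> 3"
  proof -
    have "\<bar>A* v^2*Om\<bar> = \<bar>A\<bar>* v^2*Om" using Om by (simp add: abs_mult)
    also have "\<dots> \<le> 3*1*1" by (intro mult_mono A v Om) auto
    finally show ?thesis by simp
  qed
  have dO: "\<bar>F*Om + A* v^2*Om\<bar> \<le> 6" using t1 t2 by linarith
  have s1: "\<bar>(-(2* v *((1 - v^2)*A* v)))*Om\<bar> \<le> 6"
  proof -
    have "\<bar>(-(2* v *((1 - v^2)*A* v)))*Om\<bar> = 2*(\<bar>v\<bar>*\<bar>(1 - v^2)*A* v\<bar>*Om)" using Om by (simp add: abs_mult)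
    also have "\<bar>v\<bar>*\<bar>(1 - v^2)*A* v\<bar>*Om \<le> 1*3*1" by (intro mult_mono av dv Om) auto
    finally show ?thesis by simp
  qed
  have s2: "\<bar>(3 - v^2)*(F*Om + A* v^2*Om)\<bar> \<le> 18"
  proof -
    have "\<bar>3 - v^2\<bar> \<le> 3" using v0 v by linarith
    then have "\<bar>3 - v^2\<bar> * \<bar>F*Om + A* v^2*Om\<bar> \<le> 3*6" by (intro mult_mono dO) auto
    then show ?thesis by (simp add: abs_mult)
  qed
  show ?thesis using s1 s2 by linarith
qed

lemma squeeze0:
  fixes f B :: "real \<Rightarrow> real"
  assumes "(B \<longlongrightarrow> 0) at_top" "eventually (\<lambda>t. \<bar>f t\<bar> \<le> B t) at_top"
  shows "(f \<longlongrightarrow> 0) at_top"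
proof (rule tendsto_sandwich[of "\<lambda>t. - B t" f at_top B])
  show "eventually (\<lambda>t. - B t \<le> f t) at_top" using assms(2) by (rule eventually_mono) auto
  show "eventually (\<lambda>t. f t \<le> B t) at_top" using assms(2) by (rule eventually_mono) auto
  show "((\<lambda>t. - B t) \<longlongrightarrow> 0) at_top" using tendsto_minus[OF assms(1)] by simp
qed (rule assms(1))

theorem mainTheorem1:
  fixes t0 :: real and Sp SA SB SC v1 v2 O1 O2 :: "real \<Rightarrow> real"
  assumes sol: "is_solution 0 t0 Sp SA SB SC v1 v2 O1 O2"
    and adm: "\<forall>t\<ge>t0. admissible 0 (Sp t) (SA t) (SB t) (SC t) (v1 t) (v2 t) (O1 t) (O2 t)"
    and int_O: "O1 t0 * O2 t0 > 0"
    and int_v1: "0 < (v1 t0)\<^sup>2" "(v1 t0)\<^sup>2 < 1"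
    and int_v2: "0 < (v2 t0)\<^sup>2" "(v2 t0)\<^sup>2 < 1"
  shows "((\<lambda>t. qf 0 (Sp t) (SA t) (SB t) (SC t) (v1 t) (v2 t) (O1 t) (O2 t)) \<longlongrightarrow> 1/2) at_top \<and>
         ((\<lambda>t. O1 t + O2 t) \<longlongrightarrow> 1) at_top \<and>
         (Sp \<longlongrightarrow> 0) at_top \<and> (SA \<longlongrightarrow> 0) at_top \<and>
         (SB \<longlongrightarrow> 0) at_top \<and> (SC \<longlongrightarrow> 0) at_top \<and>
         (v1 \<longlongrightarrow> 0) at_top \<and> (v2 \<longlongrightarrow> 0) at_top"
proof -
  define a where "a t = 2 * Sp t - 1" for t
  define F where "F t = 3 - (3 - (v1 t)^2) * O1 t - (3 - (v2 t)^2) * O2 t" for t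
  define S2 where "S2 t = Sig2 (Sp t) (SA t) (SB t) (SC t)" for t
  define E1 where "E1 t = (O1 t)^2 * (1 - (v1 t)^2)" for t
  have basic: "S2 t = 1 - O1 t - O2 t \<and> 0 \<le> O1 t \<and> 0 \<le> O2 t \<and> (v1 t)^2 \<le> 1 \<and> (v2 t)^2 \<le> 1"
    if "t \<ge> t0" for t
    using adm that unfolding admissible_def S2_def by auto
  have S2eq: "S2 t = (Sp t)^2 + (SA t)^2 + (SB t)^2 + (SC t)^2" for t
    by (simp add: S2_def Sig2_def)
  have qF: "qf 0 (Sp t) (SA t) (SB t) (SC t) (v1 t) (v2 t) (O1 t) (O2 t) = (F t + 1) / 2"
    if "t \<ge> t0" for t
  proof -
    have "S2 t = 1 - O1 t - O2 t" using basic[OF that] by simp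
    then show ?thesis
      unfolding qf_def Pf_def Qf_def Gp_def F_def S2_def[symmetric]
      by (simp add: algebra_simps power2_eq_square)
  qed
  have Feq: "F t = 3 * S2 t + (v1 t)^2 * O1 t + (v2 t)^2 * O2 t" if "t \<ge> t0" for t
    using basic[OF that] unfolding F_def by (simp add: algebra_simps)
  have Fnn: "0 \<le> F t" if "t \<ge> t0" for t
  proof -
    have "0 \<le> S2 t" unfolding S2eq by simp
    moreover have "0 \<le> (v1 t)^2 * O1 t" "0 \<le> (v2 t)^2 * O2 t" using basic[OF that] by simp_all
    ultimately show ?thesis using Feq[OF that] by linarith
  qed
  have Fle: "F t \<le> 3" if "t \<ge> t0" for t
  proof -
    have "(v1 t)^2 * O1 t \<le> 1 * O1 t" "(v2 t)^2 * O2 t \<le> 1 * O2 t"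
      using basic[OF that] by (intro mult_right_mono; simp)+
    then show ?thesis using Feq[OF that] basic[OF that] by linarith
  qed
  have aB: "\<bar>a t\<bar> \<le> 3" if "t \<ge> t0" for t
  proof -
    have "(Sp t)^2 \<le> 1" using basic[OF that] S2eq[of t]
      by (smt (verit) zero_le_power2)
    then have "\<bar>Sp t\<bar> \<le> 1" by (simp add: abs_square_le_1)
    then show ?thesis unfolding a_def by linarith
  qed
  have der: "(v1 has_real_derivative ((1 - (v1 t)^2) * a t * v1 t)) (at t within {t0..}) \<and>
     (v2 has_real_derivative ((1 - (v2 t)^2) * a t * v2 t)) (at t within {t0..}) \<and>
     (O1 has_real_derivative (F t * O1 t + a t * (v1 t)^2 * O1 t)) (at t within {t0..}) \<and>
     (O2 has_real_derivative (F t * O2 t + a t * (v2 t)^2 * O2 t)) (at t within {t0..})"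
    if "t \<ge> t0" for t
  proof -
    note s = sol[unfolded is_solution_def Let_def, rule_format, OF that]
    have q: "qf 0 (Sp t) (SA t) (SB t) (SC t) (v1 t) (v2 t) (O1 t) (O2 t) = (F t + 1) / 2"
      using qF[OF that] .
    have e1: "(2 * ((F t + 1) / 2) - 1 - 3 * 0) * O1 t + (3 * 0 - 1 + 2 * Sp t) * Qf 0 (v1 t) (O1 t) * v1 t
        = F t * O1 t + a t * (v1 t)^2 * O1 t"
      by (simp add: Qf_def Gp_def a_def algebra_simps power2_eq_square)
    have e2: "(2 * ((F t + 1) / 2) - 1 - 3 * 0) * O2 t + (3 * 0 - 1 + 2 * Sp t) * Qf 0 (v2 t) (O2 t) * v2 t
        = F t * O2 t + a t * (v2 t)^2 * O2 t"
      by (simp add: Qf_def Gp_def a_def algebra_simps power2_eq_square)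
    have e3: "(1 - (v1 t)^2) * (3 * 0 - 1 + 2 * Sp t) * v1 t / Gm 0 (v1 t) = (1 - (v1 t)^2) * a t * v1 t"
      by (simp add: Gm_def a_def)
    have e4: "(1 - (v2 t)^2) * (3 * 0 - 1 + 2 * Sp t) * v2 t / Gm 0 (v2 t) = (1 - (v2 t)^2) * a t * v2 t"
      by (simp add: Gm_def a_def)
    show ?thesis using s unfolding q e1 e2 e3 e4 by blast
  qed
  define DF where "DF t = -(( -(2 * v1 t * ((1 - (v1 t)^2) * a t * v1 t))) * O1 t + (3 - (v1 t)^2) * (F t * O1 t + a t * (v1 t)^2 * O1 t))
     - (( -(2 * v2 t * ((1 - (v2 t)^2) * a t * v2 t))) * O2 t + (3 - (v2 t)^2) * (F t * O2 t + a t * (v2 t)^2 * O2 t))" for t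
  have dF: "(F has_real_derivative DF t) (at t within {t0..})" if "t \<ge> t0" for t
  proof -
    note d = der[OF that]
    have "((\<lambda>s. 3 - (3 - (v1 s)^2) * O1 s - (3 - (v2 s)^2) * O2 s) has_real_derivative DF t) (at t within {t0..})"
      unfolding DF_def by (rule derivative_eq_intros d[THEN conjunct1] d[THEN conjunct2, THEN conjunct1]
          d[THEN conjunct2, THEN conjunct2, THEN conjunct1] d[THEN conjunct2, THEN conjunct2, THEN conjunct2] refl | simp)+
    moreover have "F = (\<lambda>s. 3 - (3 - (v1 s)^2) * O1 s - (3 - (v2 s)^2) * O2 s)"
      by (rule ext) (simp add: F_def)
    ultimately show ?thesis by simp
  qed
  have DFb: "\<bar>DF t\<bar> \<le> 48" if "t \<ge> t0" for t
  proof -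
    have O1le: "O1 t \<le> 1" "O2 t \<le> 1" using basic[OF that] S2eq[of t]
      by (smt (verit) zero_le_power2)+
    have "\<bar>( -(2 * v1 t * ((1 - (v1 t)^2) * a t * v1 t))) * O1 t + (3 - (v1 t)^2) * (F t * O1 t + a t * (v1 t)^2 * O1 t)\<bar> \<le> 24"
      by (rule fluid_bound) (use basic[OF that] O1le Fnn[OF that] Fle[OF that] aB[OF that] in auto)
    moreover have "\<bar>( -(2 * v2 t * ((1 - (v2 t)^2) * a t * v2 t))) * O2 t + (3 - (v2 t)^2) * (F t * O2 t + a t * (v2 t)^2 * O2 t)\<bar> \<le> 24"
      by (rule fluid_bound) (use basic[OF that] O1le Fnn[OF that] Fle[OF that] aB[OF that] in auto)
    ultimately show ?thesis unfolding DF_def by linarith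
  qed
  have Lip: "F s - F u \<le> 48 * (u - s)" if "t0 \<le> s" "s \<le> u" for s u
  proof -
    have "(\<lambda>x. 48 * x + F x) s \<le> (\<lambda>x. 48 * x + F x) u"
    proof (rule mono_deriv[where g="\<lambda>x. 48 * x + F x" and g' = "\<lambda>x. 48 + DF x"])
      fix x assume x: "s \<le> x" "x \<le> u"
      have "{s..u} \<subseteq> {t0..}" using that by auto
      then show "((\<lambda>x. 48 * x + F x) has_real_derivative 48 + DF x) (at x within {s..u})"
        using dF[of x] x that by (auto intro!: derivative_eq_intros intro: DERIV_subset)
      show "0 \<le> 48 + DF x" using DFb[of x] x that by linarith
    qed (use that in auto)
    then show ?thesis by (simp add: algebra_simps)
  qed
  have Ole: "O1 t \<le> 1 \<and> O2 t \<le> 1" if "t \<ge> t0" for t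
    using basic[OF that] S2eq[of t] by (smt (verit) zero_le_power2)
  have dE: "(E1 has_real_derivative 2 * F t * E1 t) (at t within {t0..})" if "t \<ge> t0" for t
    unfolding E1_def by (rule fluid_E) (use der[OF that] in auto)
  have Enn: "0 \<le> E1 t" if "t \<ge> t0" for t
    using basic[OF that] unfolding E1_def by simp
  have Ele: "E1 t \<le> 1" if "t \<ge> t0" for t
  proof -
    have "(O1 t)^2 \<le> 1" using basic[OF that] Ole[OF that] by (simp add: power_le_one)
    moreover have "1 - (v1 t)^2 \<le> 1" by simp
    ultimately have "(O1 t)^2 * (1 - (v1 t)^2) \<le> 1 * 1"
      using basic[OF that] by (intro mult_mono) auto
    then show ?thesis unfolding E1_def by simp
  qed
  have Emono: "E1 s \<le> E1 u" if "t0 \<le> s" "s \<le> u" for s u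
  proof (rule mono_deriv[where g=E1 and g' = "\<lambda>x. 2 * F x * E1 x"])
    fix x assume x: "s \<le> x" "x \<le> u"
    have "{s..u} \<subseteq> {t0..}" using that by auto
    then show "(E1 has_real_derivative 2 * F x * E1 x) (at x within {s..u})"
      using dE[of x] x that by (auto intro: DERIV_subset)
    show "0 \<le> 2 * F x * E1 x" using Fnn[of x] Enn[of x] x that by simp
  qed (use that in auto)
  define e1 where "e1 = E1 t0"
  have e1pos: "0 < e1"
  proof -
    have "0 < O1 t0" using int_O basic[of t0]
      by (metis less_eq_real_def mult_not_zero order_refl)
    then show ?thesis unfolding e1_def E1_def using int_v1 by simp
  qed
  have Ege: "e1 \<le> E1 t" if "t \<ge> t0" for t
    unfolding e1_def using Emono[of t0 t] that by simp
  have incr: "E1 t + \<epsilon> * e1 * (\<epsilon> / 96) \<le> E1 (t + \<epsilon> / 96)"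
    if "t \<ge> t0" "0 < \<epsilon>" "\<epsilon> \<le> F t" for t \<epsilon>
  proof -
    define h where "h = \<epsilon> / 96"
    have h: "0 < h" using that unfolding h_def by simp
    have "(\<lambda>x. E1 x - \<epsilon> * e1 * x) t \<le> (\<lambda>x. E1 x - \<epsilon> * e1 * x) (t + h)"
    proof (rule mono_deriv[where g="\<lambda>x. E1 x - \<epsilon> * e1 * x" and g' = "\<lambda>x. 2 * F x * E1 x - \<epsilon> * e1"])
      fix x assume x: "t \<le> x" "x \<le> t + h"
      have "{t..t+h} \<subseteq> {t0..}" using that by auto
      then show "((\<lambda>x. E1 x - \<epsilon> * e1 * x) has_real_derivative 2 * F x * E1 x - \<epsilon> * e1) (at x within {t..t+h})"
        using dE[of x] x that by (auto intro!: derivative_eq_intros intro: DERIV_subset)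
      have "F t - F x \<le> 48 * (x - t)" using Lip[of t x] x that by simp
      also have "\<dots> \<le> 48 * h" using x by simp
      finally have Fx: "\<epsilon> / 2 \<le> F x" using that unfolding h_def by simp
      have "\<epsilon> / 2 * e1 \<le> F x * E1 x"
        by (rule mult_mono) (use Fx Ege[of x] x that e1pos in auto)
      then show "0 \<le> 2 * F x * E1 x - \<epsilon> * e1" by simp
    qed (use h in auto)
    then show ?thesis unfolding h_def by (simp add: algebra_simps)
  qed
  have Flim: "(F \<longlongrightarrow> 0) at_top"
  proof (rule order_tendstoI)
    fix c :: real assume "c < 0"
    then show "eventually (\<lambda>x. c < F x) at_top"
      unfolding eventually_at_top_linorder using Fnn by (intro exI[of _ t0]) force
  next
    fix \<epsilon> :: real assume ep: "0 < \<epsilon>"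
    show "eventually (\<lambda>x. F x < \<epsilon>) at_top"
    proof (rule ccontr)
      assume "\<not> eventually (\<lambda>x. F x < \<epsilon>) at_top"
      then have big: "\<forall>T. \<exists>t\<ge>T. \<epsilon> \<le> F t"
        unfolding eventually_at_top_linorder by (meson not_less)
      define \<delta> where "\<delta> = \<epsilon> * e1 * (\<epsilon> / 96)"
      have dpos: "0 < \<delta>" unfolding \<delta>_def using ep e1pos by simp
      have grow: "\<exists>t\<ge>t0. e1 + real n * \<delta> \<le> E1 t" for n :: nat
      proof (induction n)
        case 0
        then show ?case unfolding e1_def by auto
      next
        case (Suc n)
        then obtain t where t: "t \<ge> t0" "e1 + real n * \<delta> \<le> E1 t" by blast
        obtain t' where t': "t' \<ge> t" "\<epsilon> \<le> F t'" using big by blast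
        have "E1 t \<le> E1 t'" using Emono[of t t'] t t' by simp
        moreover have "E1 t' + \<delta> \<le> E1 (t' + \<epsilon> / 96)"
          unfolding \<delta>_def using incr[of t' \<epsilon>] t t' ep by simp
        ultimately have "e1 + real (Suc n) * \<delta> \<le> E1 (t' + \<epsilon> / 96)"
          using t by (simp add: algebra_simps)
        moreover have "t' + \<epsilon> / 96 \<ge> t0" using t t' ep by simp
        ultimately show ?case by blast
      qed
      obtain n :: nat where n: "1 < real n * \<delta>"
        using ex_less_of_nat_mult[OF dpos] by auto
      obtain t where "t \<ge> t0" "e1 + real n * \<delta> \<le> E1 t" using grow by blast
      then show False using Ele[of t] n e1pos by linarith
    qed
  qed
  have ev: "eventually (\<lambda>t. t \<ge> t0) at_top" by (rule eventually_ge_at_top)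
  have sF: "((\<lambda>t. sqrt (F t)) \<longlongrightarrow> 0) at_top"
    using tendsto_real_sqrt[OF Flim] by simp
  have S2F: "S2 t \<le> F t" if "t \<ge> t0" for t
  proof -
    have "0 \<le> (v1 t)^2 * O1 t" "0 \<le> (v2 t)^2 * O2 t"
      using basic[OF that] by simp_all
    moreover have "0 \<le> S2 t" unfolding S2eq by simp
    ultimately show ?thesis using Feq[OF that] by linarith
  qed
  have compb: "\<bar>x\<bar> \<le> sqrt (F t)" if "t \<ge> t0" "x^2 \<le> S2 t" for x t
  proof -
    have "sqrt (x^2) \<le> sqrt (F t)" using S2F[OF that(1)] that(2) by (intro real_sqrt_le_mono) linarith
    then show ?thesis by simp
  qed
  have comp: "(g \<longlongrightarrow> 0) at_top" if "\<And>t. (g t)^2 \<le> S2 t" for g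
    by (rule squeeze0[OF sF]) (use ev in \<open>rule eventually_mono\<close>, use compb that in auto)
  have l1: "(Sp \<longlongrightarrow> 0) at_top" by (rule comp) (simp add: S2eq)
  have l2: "(SA \<longlongrightarrow> 0) at_top" by (rule comp) (simp add: S2eq)
  have l3: "(SB \<longlongrightarrow> 0) at_top" by (rule comp) (simp add: S2eq)
  have l4: "(SC \<longlongrightarrow> 0) at_top" by (rule comp) (simp add: S2eq)
  have qlim: "((\<lambda>t. qf 0 (Sp t) (SA t) (SB t) (SC t) (v1 t) (v2 t) (O1 t) (O2 t)) \<longlongrightarrow> 1/2) at_top"
  proof (rule tendsto_sandwich[of "\<lambda>t. (F t + 1) / 2" _ at_top "\<lambda>t. (F t + 1) / 2"])
    show "eventually (\<lambda>t. (F t + 1) / 2 \<le> qf 0 (Sp t) (SA t) (SB t) (SC t) (v1 t) (v2 t) (O1 t) (O2 t)) at_top"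
      using ev by (rule eventually_mono) (simp add: qF)
    show "eventually (\<lambda>t. qf 0 (Sp t) (SA t) (SB t) (SC t) (v1 t) (v2 t) (O1 t) (O2 t) \<le> (F t + 1) / 2) at_top"
      using ev by (rule eventually_mono) (simp add: qF)
    show "((\<lambda>t. (F t + 1) / 2) \<longlongrightarrow> 1/2) at_top"
      using tendsto_divide[OF tendsto_add[OF Flim tendsto_const[of 1]] tendsto_const[of 2]] by simp
    then show "((\<lambda>t. (F t + 1) / 2) \<longlongrightarrow> 1/2) at_top" .
  qed
  have Olim: "((\<lambda>t. O1 t + O2 t) \<longlongrightarrow> 1) at_top"
  proof (rule tendsto_sandwich[of "\<lambda>t. 1 - F t" _ at_top "\<lambda>t. 1"])
    show "eventually (\<lambda>t. 1 - F t \<le> O1 t + O2 t) at_top"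
      using ev by (rule eventually_mono) (use S2F basic in force)
    show "eventually (\<lambda>t. O1 t + O2 t \<le> 1) at_top"
      using ev by (rule eventually_mono) (use basic S2eq in \<open>smt (verit) zero_le_power2\<close>)
    show "((\<lambda>t. 1 - F t) \<longlongrightarrow> 1) at_top"
      using tendsto_diff[OF tendsto_const[of 1] Flim] by simp
  qed simp
  have E1O: "e1 \<le> (O1 t)^2" if "t \<ge> t0" for t
  proof -
    have "E1 t \<le> (O1 t)^2 * 1" unfolding E1_def using basic[OF that] by (intro mult_left_mono) auto
    then show ?thesis using Ege[OF that] by simp
  qed
  define E2 where "E2 t = (O2 t)^2 * (1 - (v2 t)^2)" for t
  have dE2: "(E2 has_real_derivative 2 * F t * E2 t) (at t within {t0..})" if "t \<ge> t0" for t
    unfolding E2_def by (rule fluid_E) (use der[OF that] in auto)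
  have Enn2: "0 \<le> E2 t" if "t \<ge> t0" for t
    using basic[OF that] unfolding E2_def by simp
  have Emono2: "E2 s \<le> E2 u" if "t0 \<le> s" "s \<le> u" for s u
  proof (rule mono_deriv[where g=E2 and g' = "\<lambda>x. 2 * F x * E2 x"])
    fix x assume x: "s \<le> x" "x \<le> u"
    have "{s..u} \<subseteq> {t0..}" using that by auto
    then show "(E2 has_real_derivative 2 * F x * E2 x) (at x within {s..u})"
      using dE2[of x] x that by (auto intro: DERIV_subset)
    show "0 \<le> 2 * F x * E2 x" using Fnn[of x] Enn2[of x] x that by simp
  qed (use that in auto)
  define e2 where "e2 = E2 t0"
  have e2pos: "0 < e2"
  proof -
    have "0 < O2 t0" using int_O basic[of t0]
      by (metis less_eq_real_def mult_not_zero order_refl)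
    then show ?thesis unfolding e2_def E2_def using int_v2 by simp
  qed
  have E2O: "e2 \<le> (O2 t)^2" if "t \<ge> t0" for t
  proof -
    have "E2 t \<le> (O2 t)^2 * 1" unfolding E2_def using basic[OF that] by (intro mult_left_mono) auto
    then show ?thesis using Emono2[of t0 t] that unfolding e2_def by simp
  qed
  define e where "e = min e1 e2"
  have epos: "0 < e" unfolding e_def using e1pos e2pos by simp
  have sFe: "((\<lambda>t. sqrt (F t / e)) \<longlongrightarrow> 0) at_top"
    using tendsto_real_sqrt[OF tendsto_divide[OF Flim tendsto_const[of e]]] epos by simp
  have vb: "\<bar>v t\<bar> \<le> sqrt (F t / e)"
    if "t \<ge> t0" "e \<le> (Om t)^2" "(v t)^2 * Om t \<le> F t" "0 \<le> Om t" "Om t \<le> 1" for v Om t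
  proof -
    have "(v t)^2 * e \<le> (v t)^2 * (Om t)^2" using that by (intro mult_left_mono) auto
    also have "\<dots> \<le> (v t)^2 * Om t"
      using that by (intro mult_left_mono) (auto simp: power2_eq_square mult_left_le)
    finally have "(v t)^2 \<le> F t / e" using that epos by (simp add: pos_le_divide_eq)
    then have "sqrt ((v t)^2) \<le> sqrt (F t / e)" by (rule real_sqrt_le_mono)
    then show ?thesis by simp
  qed
  have v1lim: "(v1 \<longlongrightarrow> 0) at_top"
  proof (rule squeeze0[OF sFe])
    show "eventually (\<lambda>t. \<bar>v1 t\<bar> \<le> sqrt (F t / e)) at_top"
      using ev
    proof (rule eventually_mono)
      fix t assume t: "t \<ge> t0"
      have "(v1 t)^2 * O1 t \<le> F t" using Feq[OF t] basic[OF t] S2eq[of t]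
        by (smt (verit) zero_le_power2 mult_nonneg_nonneg)
      moreover have "e \<le> (O1 t)^2" using E1O[OF t] unfolding e_def by simp
      ultimately show "\<bar>v1 t\<bar> \<le> sqrt (F t / e)"
        using vb[where v=v1 and Om=O1 and t=t] t basic[OF t] Ole[OF t] by simp
    qed
  qed
  have v2lim: "(v2 \<longlongrightarrow> 0) at_top"
  proof (rule squeeze0[OF sFe])
    show "eventually (\<lambda>t. \<bar>v2 t\<bar> \<le> sqrt (F t / e)) at_top"
      using ev
    proof (rule eventually_mono)
      fix t assume t: "t \<ge> t0"
      have "(v2 t)^2 * O2 t \<le> F t" using Feq[OF t] basic[OF t] S2eq[of t]
        by (smt (verit) zero_le_power2 mult_nonneg_nonneg)
      moreover have "e \<le> (O2 t)^2" using E2O[OF t] unfolding e_def by simp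
      ultimately show "\<bar>v2 t\<bar> \<le> sqrt (F t / e)"
        using vb[where v=v2 and Om=O2 and t=t] t basic[OF t] Ole[OF t] by simp
    qed
  qed
  show ?thesis using qlim Olim l1 l2 l3 l4 v1lim v2lim by blast
qed

end
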